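(* Let $\mathcal{X}=\{x\in\mathbb{R}^n:\|x\|_2\le1\}$, $\mathcal{Y}=\{1,\dots,|\mathcal{Y}|\}$, $K\ge1$, $N\ge1$ and $\alpha>0$. Consider the neural networks $h_{\mathbf{w}}(x)=W h^K(\cdots h^1(x))+b$ with $W\in\mathbb{R}^{|\mathcal{Y}|\times N}$, $b\in\mathbb{R}^{|\mathcal{Y}|}$, and layers $h^i(u)=\mathrm{proj}(\mathrm{leaky}(W_iu+b_i))$ where $W_1\in\mathbb{R}^{N\times n}$, $W_i\in\mathbb{R}^{N\times N}$ for $i\ge2$, $b_i\in\mathbb{R}^N$; here $\mathrm{leaky}$ is the Leaky ReLU $t\mapsto\max(t,at)$ (with a fixed slope $a\in(0,1)$) applied elementwise and $\mathrm{proj}$ is the Euclidean projection onto the closed unit $\ell_2$-ball of $\mathbb{R}^N$. Let $\mathbf{w}$ denote the vector concatenating all entries of $W,W_K,\dots,W_1,b,b_K,\dots,b_1$. Let the loss be $\ell(h,(x,y))=\frac{1}{|\mathcal{Y}|}\sum_{y'\ne y}\max\big(0,1-\alpha(h(x)[y]-h(x)[y'])\big)$, where $h(x)[y]$ denotes the $y$-th coordinate. Then for all parameter vectors $\mathbf{w},\mathbf{w}'$ such that every weight matrix ($W,W_1,\dots,W_K$ in both) has Frobenius norm at most $1$ (no constraint on biases), and for all $(x,y)\in\mathcal{X}\times\mathcal{Y}$, \[ |\ell(h_{\mathbf{w}},(x,y))-\ell(h_{\mathbf{w}'},(x,y))|\le\alpha\sqrt{2(K+2)}\,\|\mathbf{w}-\mathbf{w}'\|_2.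 \] *)

theory Defs
  imports Complex_Main
begin

text \<open>Conventions: a vector of R^d is a function nat => real, of which only
 the coordinates 1..d are used; a d1 x d2 matrix is a function nat => nat => real
 of which only entries (j,k) with j in 1..d1, k in 1..d2 are used.
 Layer weight matrices and biases are indexed by the layer number i in 1..K.\<close>

definition leaky :: "real \<Rightarrow> real \<Rightarrow> real" where
  "leaky a t = max t (a * t)"

definition vnorm :: "nat \<Rightarrow> (nat \<Rightarrow> real) \<Rightarrow> real" where
  "vnorm d u = sqrt (\<Sum>j=1..d. (u j)^2)"

definition frob :: "nat \<Rightarrow> nat \<Rightarrow> (nat \<Rightarrow> nat \<Rightarrow> real) \<Rightarrow> real" where
  "frob d1 d2 M = sqrt (\<Sum>j=1..d1. \<Sum>k=1..d2. (M j k)^2)"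

definition proj_ball :: "nat \<Rightarrow> (nat \<Rightarrow> real) \<Rightarrow> (nat \<Rightarrow> real)" where
  "proj_ball d u = (if vnorm d u \<le> 1 then u else (\<lambda>j. u j / vnorm d u))"

definition matvec :: "nat \<Rightarrow> (nat \<Rightarrow> nat \<Rightarrow> real) \<Rightarrow> (nat \<Rightarrow> real) \<Rightarrow> (nat \<Rightarrow> real)" where
  "matvec din M u = (\<lambda>j. \<Sum>k=1..din. M j k * u k)"

definition layer :: "real \<Rightarrow> nat \<Rightarrow> nat \<Rightarrow> (nat \<Rightarrow> nat \<Rightarrow> real) \<Rightarrow> (nat \<Rightarrow> real)
                     \<Rightarrow> (nat \<Rightarrow> real) \<Rightarrow> (nat \<Rightarrow> real)" where
  "layer a din N Wi bi u = proj_ball N (\<lambda>j. leaky a (matvec din Wi u j + bi j))"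

definition in_dim :: "nat \<Rightarrow> nat \<Rightarrow> nat \<Rightarrow> nat" where
  "in_dim n N i = (if i = 1 then n else N)"

fun feat :: "real \<Rightarrow> nat \<Rightarrow> nat \<Rightarrow> (nat \<Rightarrow> nat \<Rightarrow> nat \<Rightarrow> real) \<Rightarrow> (nat \<Rightarrow> nat \<Rightarrow> real)
             \<Rightarrow> nat \<Rightarrow> (nat \<Rightarrow> real) \<Rightarrow> (nat \<Rightarrow> real)" where
  "feat a n N Ws bs 0 x = x"
| "feat a n N Ws bs (Suc i) x =
     layer a (in_dim n N (Suc i)) N (Ws (Suc i)) (bs (Suc i)) (feat a n N Ws bs i x)"

definition net :: "real \<Rightarrow> nat \<Rightarrow> nat \<Rightarrow> nat \<Rightarrow> (nat \<Rightarrow> nat \<Rightarrow> real) \<Rightarrow> (nat \<Rightarrow> real)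
                   \<Rightarrow> (nat \<Rightarrow> nat \<Rightarrow> nat \<Rightarrow> real) \<Rightarrow> (nat \<Rightarrow> nat \<Rightarrow> real)
                   \<Rightarrow> (nat \<Rightarrow> real) \<Rightarrow> (nat \<Rightarrow> real)" where
  "net a n N K W b Ws bs x = (\<lambda>j. matvec N W (feat a n N Ws bs K x) j + b j)"

definition loss :: "nat \<Rightarrow> real \<Rightarrow> (nat \<Rightarrow> real) \<Rightarrow> nat \<Rightarrow> real" where
  "loss m \<alpha> hx y = (1 / real m) * (\<Sum>y'\<in>{1..m} - {y}. max 0 (1 - \<alpha> * (hx y - hx y')))"

definition param_dist :: "nat \<Rightarrow> nat \<Rightarrow> nat \<Rightarrow> nat
     \<Rightarrow> (nat \<Rightarrow> nat \<Rightarrow> real) \<Rightarrow> (nat \<Rightarrow> real) \<Rightarrow> (nat \<Rightarrow> nat \<Rightarrow> nat \<Rightarrow> real) \<Rightarrow> (nat \<Rightarrow> nat \<Rightarrow> real)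
     \<Rightarrow> (nat \<Rightarrow> nat \<Rightarrow> real) \<Rightarrow> (nat \<Rightarrow> real) \<Rightarrow> (nat \<Rightarrow> nat \<Rightarrow> nat \<Rightarrow> real) \<Rightarrow> (nat \<Rightarrow> nat \<Rightarrow> real)
     \<Rightarrow> real" where
  "param_dist n N K m W b Ws bs W' b' Ws' bs' = sqrt (
      (\<Sum>j=1..m. \<Sum>k=1..N. (W j k - W' j k)^2)
    + (\<Sum>i=1..K. \<Sum>j=1..N. \<Sum>k=1..in_dim n N i. (Ws i j k - Ws' i j k)^2)
    + (\<Sum>j=1..m. (b j - b' j)^2)
    + (\<Sum>i=1..K. \<Sum>j=1..N. (bs i j - bs' i j)^2))"

end

theory Submission
  imports Defs "HOL-Analysis.L2_Norm"
begin

lemma vnorm_L2: "vnorm d u = L2_set u {1..d}"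
  by (simp add: vnorm_def L2_set_def)

lemma vnorm_nonneg: "0 \<le> vnorm d u"
  by (simp add: vnorm_L2)

lemma vnorm_sq: "(vnorm d u)^2 = (\<Sum>j=1..d. (u j)^2)"
  unfolding vnorm_def by (simp add: sum_nonneg)

lemma frob_sq: "(frob d1 d2 M)^2 = (\<Sum>j=1..d1. \<Sum>k=1..d2. (M j k)^2)"
  unfolding frob_def by (simp add: sum_nonneg)

lemma frob_nonneg: "0 \<le> frob d1 d2 M"
  unfolding frob_def by (simp add: sum_nonneg)

lemma sum_sq_expand:
  fixes c e :: real
  shows "(\<Sum>j\<in>A. (c * u j - e * v j)^2) =
     c^2 * (\<Sum>j\<in>A. (u j)^2) + e^2 * (\<Sum>j\<in>A. (v j)^2) - 2 * c * e * (\<Sum>j\<in>A. u j * v j)"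
  by (simp add: power2_diff power_mult_distrib sum.distrib sum_subtractf sum_distrib_left algebra_simps)

lemma inner_le: "(\<Sum>j=1..d. u j * v j) \<le> vnorm d u * vnorm d v"
proof -
  have "(\<Sum>j=1..d. u j * v j) \<le> (\<Sum>j=1..d. \<bar>u j\<bar> * \<bar>v j\<bar>)"
    by (intro sum_mono) (metis abs_ge_self abs_mult)
  also have "\<dots> \<le> vnorm d u * vnorm d v" by (simp add: vnorm_L2 L2_set_mult_ineq)
  finally show ?thesis .
qed

lemma proj_form: "\<exists>c. proj_ball d u = (\<lambda>j. c * u j) \<and>
   ((vnorm d u \<le> 1 \<and> c = 1) \<or> (vnorm d u > 1 \<and> c = 1 / vnorm d u))"
  unfolding proj_ball_def by (cases "vnorm d u \<le> 1") auto

lemma proj_lip_sq: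
  "(\<Sum>j=1..d. (proj_ball d u j - proj_ball d v j)^2) \<le> (\<Sum>j=1..d. (u j - v j)^2)"
proof -
  obtain c where c: "proj_ball d u = (\<lambda>j. c * u j)"
     "(vnorm d u \<le> 1 \<and> c = 1) \<or> (vnorm d u > 1 \<and> c = 1 / vnorm d u)"
    using proj_form by blast
  obtain e where e: "proj_ball d v = (\<lambda>j. e * v j)"
     "(vnorm d v \<le> 1 \<and> e = 1) \<or> (vnorm d v > 1 \<and> e = 1 / vnorm d v)"
    using proj_form by blast
  define r where "r = vnorm d u"
  define s where "s = vnorm d v"
  define P where "P = (\<Sum>j=1..d. u j * v j)"
  have r0: "r \<ge> 0" and s0: "s \<ge> 0" by (simp_all add: r_def s_def vnorm_nonneg)
  have P: "P \<le> r * s" using inner_le unfolding P_def r_def s_def .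
  have U: "(\<Sum>j=1..d. (u j)^2) = r^2" by (simp add: r_def vnorm_sq)
  have V: "(\<Sum>j=1..d. (v j)^2) = s^2" by (simp add: s_def vnorm_sq)
  have L: "(\<Sum>j=1..d. (proj_ball d u j - proj_ball d v j)^2) = c^2 * r^2 + e^2 * s^2 - 2*c*e*P"
    unfolding c(1) e(1) sum_sq_expand U V P_def by simp
  have R: "(\<Sum>j=1..d. (u j - v j)^2) = r^2 + s^2 - 2*P"
    using sum_sq_expand[of 1 u 1 v "{1..d}"] unfolding U V P_def by simp
  show ?thesis unfolding L R
  proof -
    consider "r \<le> 1" "s \<le> 1" "c = 1" "e = 1" | "r > 1" "s \<le> 1" "c = 1/r" "e = 1"
      | "r \<le> 1" "s > 1" "c = 1" "e = 1/s" | "r > 1" "s > 1" "c = 1/r" "e = 1/s"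
      using c(2) e(2) r_def s_def by blast
    then show "c^2 * r^2 + e^2 * s^2 - 2*c*e*P \<le> r^2 + s^2 - 2*P"
    proof cases
      case 1 then show ?thesis by simp
    next
      case 2
      have "P \<le> r" using P s0 r0 \<open>s \<le> 1\<close> by (smt (verit) mult_left_le)
      have "2 * P * (r - 1) \<le> r * (r+1) * (r - 1)"
      proof (intro mult_right_mono)
        have "r * 1 \<le> r * r" using 2 by (intro mult_left_mono) auto
        then show "2 * P \<le> r * (r+1)" using \<open>P \<le> r\<close> by (simp add: algebra_simps)
      qed (use 2 in auto)
      hence "r * (1 + s^2 - 2*P/r) \<le> r * (r^2 + s^2 - 2*P)"
        using 2 by (simp add: algebra_simps power2_eq_square power3_eq_cube)
      hence "1 + s^2 - 2*P/r \<le> r^2 + s^2 - 2*P" using 2 by simp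
      then show ?thesis using 2 by (simp add: power_divide)
    next
      case 3
      have "P \<le> s" using P s0 r0 \<open>r \<le> 1\<close> by (smt (verit) mult_right_le_one_le mult.commute)
      have "2 * P * (s - 1) \<le> s * (s+1) * (s - 1)"
      proof (intro mult_right_mono)
        have "s * 1 \<le> s * s" using 3 by (intro mult_left_mono) auto
        then show "2 * P \<le> s * (s+1)" using \<open>P \<le> s\<close> by (simp add: algebra_simps)
      qed (use 3 in auto)
      hence "s * (r^2 + 1 - 2*P/s) \<le> s * (r^2 + s^2 - 2*P)"
        using 3 by (simp add: algebra_simps power2_eq_square power3_eq_cube)
      hence "r^2 + 1 - 2*P/s \<le> r^2 + s^2 - 2*P" using 3 by simp
      then show ?thesis using 3 by (simp add: power_divide)
    next
      case 4
      have rs: "r * s > 1" using 4 by (metis less_1_mult)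
      have "2 * P * (r*s - 1) \<le> 2 * (r * s) * (r*s - 1)"
        using P rs by (intro mult_right_mono) auto
      also have "\<dots> \<le> (r^2 + s^2 - 2) * (r * s)"
      proof -
        have "(r^2+s^2-2)*(r*s) - 2*(r*s)*(r*s-1) = (r*s)*(r-s)^2"
          by (simp add: algebra_simps power2_eq_square)
        moreover have "(r*s)*(r-s)^2 \<ge> 0" using rs by simp
        ultimately show ?thesis by linarith
      qed
      finally have "(r*s) * (2 - 2*P/(r*s)) \<le> (r*s) * (r^2 + s^2 - 2*P)"
        using rs by (simp add: algebra_simps)
      hence "2 - 2*P/(r*s) \<le> r^2 + s^2 - 2*P"
        by (rule mult_left_le_imp_le) (use rs in linarith)
      then show ?thesis using 4 by (simp add: power_divide)
    qed
  qed
qed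


lemma proj_lip: "vnorm d (\<lambda>j. proj_ball d u j - proj_ball d v j) \<le> vnorm d (\<lambda>j. u j - v j)"
  unfolding vnorm_def using proj_lip_sq by (rule real_sqrt_le_mono)

lemma proj_bound: "vnorm d (proj_ball d u) \<le> 1"
proof (cases "vnorm d u \<le> 1")
  case True then show ?thesis by (simp add: proj_ball_def)
next
  case False
  hence r: "vnorm d u > 0" by simp
  have "vnorm d (\<lambda>j. u j / vnorm d u) = vnorm d (\<lambda>j. (1 / vnorm d u) * u j)" by simp
  also have "\<dots> = (1 / vnorm d u) * vnorm d u"
    unfolding vnorm_L2 using r by (subst L2_set_right_distrib) (auto simp: vnorm_L2)
  also have "\<dots> = 1" using r by simp
  finally show ?thesis using False by (simp add: proj_ball_def)
qed

lemma leaky_lip: assumes "0 \<le> a" "a \<le> 1" shows "\<bar>leaky a t - leaky a s\<bar> \<le> \<bar>t - s\<bar>"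
proof -
  have L: "leaky a z = (if z \<ge> 0 then z else a * z)" for z
  proof (cases "z \<ge> 0")
    case True then have "a * z \<le> z" using assms by (simp add: mult_left_le_one_le)
    then show ?thesis using True by (simp add: leaky_def)
  next
    case False then have "a * z \<ge> z" using assms by (simp add: mult_le_cancel_right1)
    then show ?thesis using False by (simp add: leaky_def)
  qed
  have at: "a * \<bar>t - s\<bar> \<le> \<bar>t - s\<bar>" using assms by (simp add: mult_left_le_one_le)
  show ?thesis
  proof (cases "t \<ge> 0"; cases "s \<ge> 0")
    assume "t \<ge> 0" "s \<ge> 0" then show ?thesis by (simp add: L)
  next
    assume "t \<ge> 0" "\<not> s \<ge> 0"
    moreover have "a * s \<ge> s" using \<open>\<not> s \<ge> 0\<close> assms by (simp add: mult_le_cancel_right1)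
    moreover have "a * s \<le> 0" using \<open>\<not> s \<ge> 0\<close> assms by (simp add: mult_nonneg_nonpos)
    ultimately show ?thesis by (simp add: L)
  next
    assume "\<not> t \<ge> 0" "s \<ge> 0"
    moreover have "a * t \<ge> t" using \<open>\<not> t \<ge> 0\<close> assms by (simp add: mult_le_cancel_right1)
    moreover have "a * t \<le> 0" using \<open>\<not> t \<ge> 0\<close> assms by (simp add: mult_nonneg_nonpos)
    ultimately show ?thesis by (simp add: L)
  next
    assume "\<not> t \<ge> 0" "\<not> s \<ge> 0"
    moreover have "\<bar>a * t - a * s\<bar> = a * \<bar>t - s\<bar>" using assms
      by (simp add: abs_mult right_diff_distrib[symmetric])
    ultimately show ?thesis using at by (simp add: L)
  qed
qed

lemma vnorm_mono_abs: assumes "\<And>j. j \<in> {1..d} \<Longrightarrow> \<bar>u j\<bar> \<le> \<bar>v j\<bar>"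
  shows "vnorm d u \<le> vnorm d v"
  unfolding vnorm_def
  by (intro real_sqrt_le_mono sum_mono) (use assms in \<open>simp add: abs_le_square_iff\<close>)

lemma vnorm_triangle: "vnorm d (\<lambda>j. u j + v j) \<le> vnorm d u + vnorm d v"
  unfolding vnorm_L2 by (rule L2_set_triangle_ineq)

lemma matvec_bound: "vnorm d1 (matvec d2 M u) \<le> frob d1 d2 M * vnorm d2 u"
proof -
  have row: "(matvec d2 M u j)^2 \<le> (\<Sum>k=1..d2. (M j k)^2) * (vnorm d2 u)^2" for j
  proof -
    have "\<bar>matvec d2 M u j\<bar> \<le> (\<Sum>k=1..d2. \<bar>M j k\<bar> * \<bar>u k\<bar>)"
      unfolding matvec_def by (rule order_trans[OF sum_abs]) (simp add: abs_mult)
    also have "\<dots> \<le> L2_set (M j) {1..d2} * vnorm d2 u"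
      unfolding vnorm_L2 by (rule L2_set_mult_ineq)
    finally have "\<bar>matvec d2 M u j\<bar> \<le> L2_set (M j) {1..d2} * vnorm d2 u" .
    hence "(matvec d2 M u j)^2 \<le> (L2_set (M j) {1..d2} * vnorm d2 u)^2"
      by (metis abs_le_square_iff abs_of_nonneg L2_set_nonneg vnorm_nonneg zero_le_mult_iff)
    also have "\<dots> = (\<Sum>k=1..d2. (M j k)^2) * (vnorm d2 u)^2"
      by (simp add: power_mult_distrib L2_set_def sum_nonneg)
    finally show ?thesis .
  qed
  have "(vnorm d1 (matvec d2 M u))^2 = (\<Sum>j=1..d1. (matvec d2 M u j)^2)" by (rule vnorm_sq)
  also have "\<dots> \<le> (\<Sum>j=1..d1. (\<Sum>k=1..d2. (M j k)^2) * (vnorm d2 u)^2)"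
    by (intro sum_mono row)
  also have "\<dots> = (frob d1 d2 M)^2 * (vnorm d2 u)^2"
    by (simp add: frob_sq sum_distrib_right)
  also have "\<dots> = (frob d1 d2 M * vnorm d2 u)^2" by (simp add: power_mult_distrib)
  finally have "(vnorm d1 (matvec d2 M u))^2 \<le> (frob d1 d2 M * vnorm d2 u)^2" .
  thus ?thesis
    by (rule power2_le_imp_le) (simp add: frob_nonneg vnorm_nonneg)
qed

lemma affine_lip:
  assumes "vnorm din f \<le> 1" "frob d din W2 \<le> 1"
  shows "vnorm d (\<lambda>j. (matvec din W1 f j + b1 j) - (matvec din W2 g j + b2 j))
     \<le> frob d din (\<lambda>j k. W1 j k - W2 j k) + vnorm din (\<lambda>k. f k - g k) + vnorm d (\<lambda>j. b1 j - b2 j)"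
proof -
  let ?X = "matvec din (\<lambda>j k. W1 j k - W2 j k) f"
  let ?Y = "matvec din W2 (\<lambda>k. f k - g k)"
  let ?Z = "\<lambda>j. b1 j - b2 j"
  have eq: "(\<lambda>j. (matvec din W1 f j + b1 j) - (matvec din W2 g j + b2 j)) = (\<lambda>j. (?X j + ?Y j) + ?Z j)"
    by (auto simp: matvec_def sum_subtractf[symmetric] sum.distrib[symmetric] algebra_simps)
  have "vnorm d (\<lambda>j. (?X j + ?Y j) + ?Z j) \<le> vnorm d (\<lambda>j. ?X j + ?Y j) + vnorm d ?Z"
    by (rule vnorm_triangle)
  also have "\<dots> \<le> (vnorm d ?X + vnorm d ?Y) + vnorm d ?Z"
    using vnorm_triangle[of d ?X ?Y] by simp
  also have "vnorm d ?X \<le> frob d din (\<lambda>j k. W1 j k - W2 j k)"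
  proof -
    have "frob d din (\<lambda>j k. W1 j k - W2 j k) * vnorm din f \<le> frob d din (\<lambda>j k. W1 j k - W2 j k) * 1"
      using assms(1) by (intro mult_left_mono) (auto simp: frob_nonneg)
    then show ?thesis using matvec_bound[of d din "\<lambda>j k. W1 j k - W2 j k" f] by linarith
  qed
  also have "vnorm d ?Y \<le> vnorm din (\<lambda>k. f k - g k)"
  proof -
    have "frob d din W2 * vnorm din (\<lambda>k. f k - g k) \<le> 1 * vnorm din (\<lambda>k. f k - g k)"
      using assms(2) by (intro mult_right_mono) (auto simp: vnorm_nonneg)
    then show ?thesis using matvec_bound[of d din W2 "\<lambda>k. f k - g k"] by linarith
  qed
  finally show ?thesis unfolding eq by simp
qed

lemma layer_lip:
  assumes "0 \<le> a" "a \<le> 1" "vnorm din f \<le> 1" "frob N din W2 \<le> 1"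
  shows "vnorm N (\<lambda>j. layer a din N W1 b1 f j - layer a din N W2 b2 g j)
     \<le> frob N din (\<lambda>j k. W1 j k - W2 j k) + vnorm din (\<lambda>k. f k - g k) + vnorm N (\<lambda>j. b1 j - b2 j)"
proof -
  have "vnorm N (\<lambda>j. layer a din N W1 b1 f j - layer a din N W2 b2 g j)
     \<le> vnorm N (\<lambda>j. leaky a (matvec din W1 f j + b1 j) - leaky a (matvec din W2 g j + b2 j))"
    unfolding layer_def by (rule proj_lip)
  also have "\<dots> \<le> vnorm N (\<lambda>j. (matvec din W1 f j + b1 j) - (matvec din W2 g j + b2 j))"
    by (rule vnorm_mono_abs) (use leaky_lip[OF assms(1,2)] in simp)
  also have "\<dots> \<le> frob N din (\<lambda>j k. W1 j k - W2 j k) + vnorm din (\<lambda>k. f k - g k) + vnorm N (\<lambda>j. b1 j - b2 j)"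
    by (rule affine_lip[OF assms(3,4)])
  finally show ?thesis .
qed


lemma feat_bound:
  assumes "vnorm n x \<le> 1"
  shows "vnorm (in_dim n N (Suc i)) (feat a n N Ws bs i x) \<le> 1"
proof (cases i)
  case 0 then show ?thesis using assms by (simp add: in_dim_def)
next
  case (Suc j) then show ?thesis by (simp add: in_dim_def layer_def proj_bound)
qed

lemma feat_diff:
  assumes "0 \<le> a" "a \<le> 1" "vnorm n x \<le> 1"
    and "\<forall>i\<in>{1..K}. frob N (in_dim n N i) (Ws' i) \<le> 1"
  shows "i \<le> K \<Longrightarrow> vnorm (in_dim n N (Suc i)) (\<lambda>j. feat a n N Ws bs i x j - feat a n N Ws' bs' i x j)
    \<le> (\<Sum>k=1..i. frob N (in_dim n N k) (\<lambda>j l. Ws k j l - Ws' k j l) + vnorm N (\<lambda>j. bs k j - bs' k j))"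
proof (induction i)
  case 0 then show ?case by (simp add: vnorm_def)
next
  case (Suc i)
  have fb: "vnorm (in_dim n N (Suc i)) (feat a n N Ws bs i x) \<le> 1" by (rule feat_bound[OF assms(3)])
  have wb: "frob N (in_dim n N (Suc i)) (Ws' (Suc i)) \<le> 1" using assms(4) Suc.prems by auto
  have dimN: "in_dim n N (Suc (Suc i)) = N" by (simp add: in_dim_def)
  have "vnorm (in_dim n N (Suc (Suc i))) (\<lambda>j. feat a n N Ws bs (Suc i) x j - feat a n N Ws' bs' (Suc i) x j)
     \<le> frob N (in_dim n N (Suc i)) (\<lambda>j k. Ws (Suc i) j k - Ws' (Suc i) j k)
       + vnorm (in_dim n N (Suc i)) (\<lambda>k. feat a n N Ws bs i x k - feat a n N Ws' bs' i x k)
       + vnorm N (\<lambda>j. bs (Suc i) j - bs' (Suc i) j)"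
    unfolding dimN feat.simps by (rule layer_lip[OF assms(1,2) fb wb])
  also have "\<dots> \<le> frob N (in_dim n N (Suc i)) (\<lambda>j k. Ws (Suc i) j k - Ws' (Suc i) j k)
       + (\<Sum>k=1..i. frob N (in_dim n N k) (\<lambda>j l. Ws k j l - Ws' k j l) + vnorm N (\<lambda>j. bs k j - bs' k j))
       + vnorm N (\<lambda>j. bs (Suc i) j - bs' (Suc i) j)"
    using Suc by simp
  also have "\<dots> = (\<Sum>k=1..Suc i. frob N (in_dim n N k) (\<lambda>j l. Ws k j l - Ws' k j l) + vnorm N (\<lambda>j. bs k j - bs' k j))"
    by (simp add: sum.cl_ivl_Suc)
  finally show ?case .
qed

lemma max0_lip: "\<bar>max 0 (p::real) - max 0 q\<bar> \<le> \<bar>p - q\<bar>"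
  by (simp add: max_def abs_if)

lemma cs_loss:
  assumes "y \<in> {1..m}"
  shows "(\<Sum>j\<in>{1..m}-{y}. \<bar>u y\<bar> + \<bar>u j\<bar>) \<le> real m * vnorm m u"
proof -
  define S where "S = {1..m} - {y}"
  define g where "g j = (if j = y then real m - 1 else 1)" for j
  have m: "m \<ge> 1" using assms by auto
  have fin: "finite S" by (simp add: S_def)
  have cardS: "real (card S) = real m - 1" using assms m by (simp add: S_def of_nat_diff)
  have gm: "g y \<ge> 0" using m by (simp add: g_def)
  have "(\<Sum>j\<in>S. \<bar>u y\<bar> + \<bar>u j\<bar>) = (real m - 1) * \<bar>u y\<bar> + (\<Sum>j\<in>S. \<bar>u j\<bar>)"
    by (simp add: sum.distrib cardS)
  also have "\<dots> = (\<Sum>j\<in>{1..m}. \<bar>g j\<bar> * \<bar>u j\<bar>)"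
  proof -
    have "(\<Sum>j\<in>{1..m}. \<bar>g j\<bar> * \<bar>u j\<bar>) = \<bar>g y\<bar> * \<bar>u y\<bar> + (\<Sum>j\<in>S. \<bar>g j\<bar> * \<bar>u j\<bar>)"
      unfolding S_def using assms by (simp add: sum.remove)
    also have "(\<Sum>j\<in>S. \<bar>g j\<bar> * \<bar>u j\<bar>) = (\<Sum>j\<in>S. \<bar>u j\<bar>)"
      by (rule sum.cong) (auto simp: S_def g_def)
    finally show ?thesis using gm by (simp add: g_def)
  qed
  also have "\<dots> \<le> L2_set g {1..m} * vnorm m u"
    unfolding vnorm_L2 by (rule L2_set_mult_ineq)
  also have "L2_set g {1..m} \<le> real m"
  proof -
    have "(\<Sum>j\<in>{1..m}. (g j)^2) = (g y)^2 + (\<Sum>j\<in>S. (g j)^2)"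
      unfolding S_def using assms by (simp add: sum.remove)
    also have "(\<Sum>j\<in>S. (g j)^2) = (\<Sum>j\<in>S. 1)"
      by (rule sum.cong) (auto simp: S_def g_def)
    finally have "(\<Sum>j\<in>{1..m}. (g j)^2) = (real m - 1)^2 + (real m - 1)"
      using cardS by (simp add: g_def)
    also have "\<dots> \<le> (real m)^2" by (simp add: power2_eq_square algebra_simps)
    finally have "L2_set g {1..m} \<le> sqrt ((real m)^2)"
      unfolding L2_set_def by (rule real_sqrt_le_mono)
    then show ?thesis by simp
  qed
  finally show ?thesis unfolding S_def by (simp add: mult_right_mono vnorm_nonneg)
qed


lemma loss_lip:
  assumes "\<alpha> > 0" "y \<in> {1..m}"
  shows "\<bar>loss m \<alpha> h y - loss m \<alpha> h' y\<bar> \<le> \<alpha> * vnorm m (\<lambda>j. h j - h' j)"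
proof -
  define S where "S = {1..m} - {y}"
  define d where "d j = h j - h' j" for j
  have m: "real m > 0" using assms by auto
  have "loss m \<alpha> h y - loss m \<alpha> h' y
     = (1 / real m) * (\<Sum>j\<in>S. max 0 (1 - \<alpha> * (h y - h j)) - max 0 (1 - \<alpha> * (h' y - h' j)))"
    by (simp add: loss_def S_def sum_subtractf right_diff_distrib)
  hence "\<bar>loss m \<alpha> h y - loss m \<alpha> h' y\<bar>
     = (1 / real m) * \<bar>\<Sum>j\<in>S. max 0 (1 - \<alpha> * (h y - h j)) - max 0 (1 - \<alpha> * (h' y - h' j))\<bar>"
    using m by (simp add: abs_mult)
  also have "\<dots> \<le> (1 / real m) * (\<Sum>j\<in>S. \<alpha> * (\<bar>d y\<bar> + \<bar>d j\<bar>))"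
  proof (intro mult_left_mono order_trans[OF sum_abs] sum_mono)
    fix j
    have "\<bar>max 0 (1 - \<alpha> * (h y - h j)) - max 0 (1 - \<alpha> * (h' y - h' j))\<bar>
        \<le> \<bar>(1 - \<alpha> * (h y - h j)) - (1 - \<alpha> * (h' y - h' j))\<bar>" by (rule max0_lip)
    also have "(1 - \<alpha> * (h y - h j)) - (1 - \<alpha> * (h' y - h' j)) = \<alpha> * (d j - d y)"
      by (simp add: d_def algebra_simps)
    also have "\<bar>\<alpha> * (d j - d y)\<bar> = \<alpha> * \<bar>d j - d y\<bar>" using assms by (simp add: abs_mult)
    also have "\<dots> \<le> \<alpha> * (\<bar>d y\<bar> + \<bar>d j\<bar>)" using assms by (intro mult_left_mono) auto
    finally show "\<bar>max 0 (1 - \<alpha> * (h y - h j)) - max 0 (1 - \<alpha> * (h' y - h' j))\<bar> \<le> \<alpha> * (\<bar>d y\<bar> + \<bar>d j\<bar>)" .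
  qed (use m in auto)
  also have "\<dots> = (\<alpha> / real m) * (\<Sum>j\<in>S. \<bar>d y\<bar> + \<bar>d j\<bar>)"
    by (simp add: sum_distrib_left[symmetric])
  also have "\<dots> \<le> (\<alpha> / real m) * (real m * vnorm m d)"
    unfolding S_def using assms by (intro mult_left_mono cs_loss) auto
  also have "\<dots> = \<alpha> * vnorm m (\<lambda>j. h j - h' j)" using m by (simp add: d_def[abs_def])
  finally show ?thesis .
qed

lemma final_cs:
  fixes A B :: "nat \<Rightarrow> real" and A0 B0 :: real
  assumes "A0 \<ge> 0" "B0 \<ge> 0"
  shows "A0 + B0 + (\<Sum>k=1..K. A k + B k)
     \<le> sqrt (2 * (real K + 1)) * sqrt (A0^2 + (\<Sum>k=1..K. (A k)^2) + B0^2 + (\<Sum>k=1..K. (B k)^2))"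
proof -
  define a where "a k = (if k = 0 then A0 else A k)" for k
  define b where "b k = (if k = 0 then B0 else B k)" for k
  define c where "c k = a k + b k" for k
  have s1: "(\<Sum>k=0..K. f k) = f 0 + (\<Sum>k=1..K. f k)" for f :: "nat \<Rightarrow> real"
    by (simp add: sum.atLeast_Suc_atMost)
  have e1: "(\<Sum>k=1..K. f (if k = 0 then x else g k)) = (\<Sum>k=1..K. f (g k))" for f :: "real \<Rightarrow> real" and x g
    by (rule sum.cong) auto
  have "A0 + B0 + (\<Sum>k=1..K. A k + B k) = (\<Sum>k=0..K. c k)"
    unfolding s1 c_def a_def b_def by (simp add: sum.distrib)
  also have "\<dots> \<le> (\<Sum>k\<in>{0..K}. \<bar>1::real\<bar> * \<bar>c k\<bar>)" by (intro sum_mono) auto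
  also have "\<dots> \<le> L2_set (\<lambda>_. 1) {0..K} * L2_set c {0..K}" by (rule L2_set_mult_ineq)
  also have "L2_set (\<lambda>_. 1) {0..K} = sqrt (real K + 1)" by (simp add: L2_set_constant)
  also have "L2_set c {0..K} \<le> sqrt (2 * (A0^2 + (\<Sum>k=1..K. (A k)^2) + B0^2 + (\<Sum>k=1..K. (B k)^2)))"
  proof -
    have "(\<Sum>k=0..K. (c k)^2) \<le> (\<Sum>k=0..K. 2 * ((a k)^2 + (b k)^2))"
    proof (intro sum_mono)
      fix k
      have "2 * ((a k)^2 + (b k)^2) - (c k)^2 = (a k - b k)^2" by (simp add: c_def power2_eq_square algebra_simps)
      then show "(c k)^2 \<le> 2 * ((a k)^2 + (b k)^2)" by (smt (verit) zero_le_power2)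
    qed
    also have "\<dots> = 2 * (A0^2 + (\<Sum>k=1..K. (A k)^2) + B0^2 + (\<Sum>k=1..K. (B k)^2))"
      unfolding s1 a_def b_def by (simp add: sum.distrib sum_distrib_left[symmetric] algebra_simps)
    finally show ?thesis unfolding L2_set_def by (rule real_sqrt_le_mono)
  qed
  finally have "A0 + B0 + (\<Sum>k=1..K. A k + B k)
     \<le> sqrt (real K + 1) * sqrt (2 * (A0^2 + (\<Sum>k=1..K. (A k)^2) + B0^2 + (\<Sum>k=1..K. (B k)^2)))"
    by (simp add: mult_left_mono)
  also have "\<dots> = sqrt (2 * (real K + 1)) * sqrt (A0^2 + (\<Sum>k=1..K. (A k)^2) + B0^2 + (\<Sum>k=1..K. (B k)^2))"
    unfolding real_sqrt_mult[symmetric] by (simp add: algebra_simps)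
  finally show ?thesis .
qed

theorem lemmaD1:
  fixes n N K m :: nat and a \<alpha> :: real
    and W W' :: "nat \<Rightarrow> nat \<Rightarrow> real" and b b' :: "nat \<Rightarrow> real"
    and Ws Ws' :: "nat \<Rightarrow> nat \<Rightarrow> nat \<Rightarrow> real" and bs bs' :: "nat \<Rightarrow> nat \<Rightarrow> real"
    and x :: "nat \<Rightarrow> real" and y :: nat
  assumes "K \<ge> 1" and "N \<ge> 1" and "\<alpha> > 0" and "0 < a" and "a < 1"
    and "frob m N W \<le> 1" and "frob m N W' \<le> 1"
    and "\<forall>i\<in>{1..K}. frob N (in_dim n N i) (Ws i) \<le> 1"
    and "\<forall>i\<in>{1..K}. frob N (in_dim n N i) (Ws' i) \<le> 1"
    and "vnorm n x \<le> 1" and "y \<in> {1..m}"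
  shows "\<bar>loss m \<alpha> (net a n N K W b Ws bs x) y - loss m \<alpha> (net a n N K W' b' Ws' bs' x) y\<bar>
         \<le> \<alpha> * sqrt (2 * (real K + 2)) * param_dist n N K m W b Ws bs W' b' Ws' bs'"
proof -
  let ?F = "feat a n N Ws bs K x"
  let ?F' = "feat a n N Ws' bs' K x"
  let ?WD = "frob m N (\<lambda>j k. W j k - W' j k)"
  let ?BD = "vnorm m (\<lambda>j. b j - b' j)"
  let ?A = "\<lambda>k. frob N (in_dim n N k) (\<lambda>j l. Ws k j l - Ws' k j l)"
  let ?B = "\<lambda>k. vnorm N (\<lambda>j. bs k j - bs' k j)"
  let ?pd = "param_dist n N K m W b Ws bs W' b' Ws' bs'"
  have a0: "0 \<le> a" "a \<le> 1" using assms(4,5) by auto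
  have dimK: "in_dim n N (Suc K) = N" using assms(1) by (simp add: in_dim_def)
  have Fb: "vnorm N ?F \<le> 1" using feat_bound[OF assms(10), where N=N and i=K and a=a and Ws=Ws and bs=bs] dimK by simp
  have Fd: "vnorm N (\<lambda>j. ?F j - ?F' j) \<le> (\<Sum>k=1..K. ?A k + ?B k)"
    using feat_diff[OF a0 assms(10) assms(9), where i=K and Ws=Ws and bs=bs and bs'=bs'] dimK by simp
  have nd: "vnorm m (\<lambda>j. net a n N K W b Ws bs x j - net a n N K W' b' Ws' bs' x j)
      \<le> ?WD + vnorm N (\<lambda>j. ?F j - ?F' j) + ?BD"
    unfolding net_def by (rule affine_lip[OF Fb assms(7)])
  have pd: "?pd = sqrt (?WD^2 + (\<Sum>k=1..K. (?A k)^2) + ?BD^2 + (\<Sum>k=1..K. (?B k)^2))"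
    by (simp add: param_dist_def frob_sq vnorm_sq)
  have T: "?WD + ?BD + (\<Sum>k=1..K. ?A k + ?B k) \<le> sqrt (2 * (real K + 1)) * ?pd"
    unfolding pd by (rule final_cs) (simp_all add: frob_nonneg vnorm_nonneg)
  have pd0: "?pd \<ge> 0" unfolding pd by (intro real_sqrt_ge_zero add_nonneg_nonneg sum_nonneg zero_le_power2)
  have "\<bar>loss m \<alpha> (net a n N K W b Ws bs x) y - loss m \<alpha> (net a n N K W' b' Ws' bs' x) y\<bar>
      \<le> \<alpha> * vnorm m (\<lambda>j. net a n N K W b Ws bs x j - net a n N K W' b' Ws' bs' x j)"
    by (rule loss_lip[OF assms(3,11)])
  also have "\<dots> \<le> \<alpha> * (sqrt (2 * (real K + 1)) * ?pd)"
    using nd Fd T assms(3) by (intro mult_left_mono) auto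
  also have "\<dots> \<le> \<alpha> * (sqrt (2 * (real K + 2)) * ?pd)"
    using assms(3) pd0 by (intro mult_left_mono mult_right_mono) auto
  finally show ?thesis by (simp add: mult.assoc)
qed

end
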